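(* Assume no dense set exists, let $\mathcal O\subseteq V$ with $|\mathcal O|\le k$ and $f(\mathcal O)=\mathrm{OPT}$, and let $S'\subseteq V$ satisfy $f(S')\le\alpha\,\mathrm{OPT}$ with $\alpha=3\cdot10^{-3}$. Let $\epsilon=10^{-8}$ and $G=\{o\in\mathcal O: f(o\mid S')\ge\frac{1+\epsilon}{2}\cdot\frac{\mathrm{OPT}}{k}\}$. Then $|G|\ge\eta k$.
   Context: $V$ is a finite ground set; $f:2^V\to\mathbb{R}_{\ge0}$ is monotone, submodular and normalized; $f(e\mid Y)=f(Y\cup\{e\})-f(Y)$. $k$ is a positive integer, $\mathrm{OPT}=\max\{f(S):S\subseteq V,|S|\le k\}$. A set $D$ is dense if $|D|\le\eta k$ and $f(D)\ge\frac{1-\gamma}{2}\mathrm{OPT}$, where $\gamma=10^{-2}$, $\eta=5\cdot10^{-5}$. *)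

theory Defs
  imports Complex_Main
begin

definition normalized :: "('a set \<Rightarrow> real) \<Rightarrow> bool" where
  "normalized f \<longleftrightarrow> f {} = 0"

definition nonneg_on :: "'a set \<Rightarrow> ('a set \<Rightarrow> real) \<Rightarrow> bool" where
  "nonneg_on V f \<longleftrightarrow> (\<forall>S. S \<subseteq> V \<longrightarrow> f S \<ge> 0)"

definition monotone_set_fun :: "'a set \<Rightarrow> ('a set \<Rightarrow> real) \<Rightarrow> bool" where
  "monotone_set_fun V f \<longleftrightarrow> (\<forall>A B. A \<subseteq> B \<and> B \<subseteq> V \<longrightarrow> f A \<le> f B)"

definition submodular :: "'a set \<Rightarrow> ('a set \<Rightarrow> real) \<Rightarrow> bool" where
  "submodular V f \<longleftrightarrow>
     (\<forall>A B. A \<subseteq> V \<and> B \<subseteq> V \<longrightarrow> f (A \<union> B) + f (A \<inter> B) \<le> f A + f B)"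

definition marg :: "('a set \<Rightarrow> real) \<Rightarrow> 'a \<Rightarrow> 'a set \<Rightarrow> real" where
  "marg f e Y = f (Y \<union> {e}) - f Y"

definition OPT :: "'a set \<Rightarrow> ('a set \<Rightarrow> real) \<Rightarrow> nat \<Rightarrow> real" where
  "OPT V f k = Max (f ` {S. S \<subseteq> V \<and> card S \<le> k})"

definition gamma :: real where "gamma = 10 powi (-2)"
definition eta :: real where "eta = 5 * 10 powi (-5)"

definition dense :: "'a set \<Rightarrow> ('a set \<Rightarrow> real) \<Rightarrow> nat \<Rightarrow> 'a set \<Rightarrow> bool" where
  "dense V f k D \<longleftrightarrow> D \<subseteq> V \<and> real (card D) \<le> eta * real k
      \<and> f D \<ge> (1 - gamma) / 2 * OPT V f k"

end

theory Submission
  imports Defs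
begin

lemma dimret:
  assumes sub: "submodular V f" and mono: "monotone_set_fun V f"
    and "A \<subseteq> C" "C \<subseteq> V" "b \<in> V"
  shows "marg f b C \<le> marg f b A"
proof (cases "b \<in> C")
  case True
  then have "C \<union> {b} = C" by auto
  moreover have "A \<union> {b} \<subseteq> V" using assms by auto
  moreover have "f A \<le> f (A \<union> {b})" using mono calculation unfolding monotone_set_fun_def by blast
  ultimately show ?thesis unfolding marg_def by simp
next
  case False
  have i: "(A \<union> {b}) \<inter> C = A" using False assms by auto
  have u: "(A \<union> {b}) \<union> C = C \<union> {b}" using assms by auto
  have "f ((A \<union> {b}) \<union> C) + f ((A \<union> {b}) \<inter> C) \<le> f (A \<union> {b}) + f C"
    using sub assms unfolding submodular_def
    by (meson Un_least insert_subset subset_trans empty_subsetI)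
  then show ?thesis unfolding marg_def i u by simp
qed

lemma sumbound:
  assumes sub: "submodular V f" and mono: "monotone_set_fun V f"
    and "finite B" "A \<subseteq> V" "B \<subseteq> V"
  shows "f (A \<union> B) \<le> f A + (\<Sum>b\<in>B. marg f b A)"
  using assms(3,5)
proof (induction B rule: finite_induct)
  case empty
  then show ?case by simp
next
  case (insert x F)
  have "marg f x (A \<union> F) \<le> marg f x A"
    using dimret[OF sub mono, of A "A \<union> F" x] insert assms by auto
  then have "f (A \<union> insert x F) \<le> f (A \<union> F) + marg f x A"
    unfolding marg_def by (simp add: Un_insert_right insert_commute)
  then show ?case using insert by simp
qed

theorem mainTheorem11:
  fixes V :: "'a set" and f :: "'a set \<Rightarrow> real" and k :: nat
    and Os S' :: "'a set" and alpha epsilon :: real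
  assumes "finite V"
    and "nonneg_on V f" and "monotone_set_fun V f" and "submodular V f" and "normalized f"
    and "k > 0"
    and no_dense: "\<not> (\<exists>D. dense V f k D)"
    and "Os \<subseteq> V" and "card Os \<le> k" and "f Os = OPT V f k"
    and "alpha = 3 * 10 powi (-3)"
    and "S' \<subseteq> V" and "f S' \<le> alpha * OPT V f k"
    and "epsilon = 10 powi (-8)"
  shows "real (card {x \<in> Os. marg f x S' \<ge> (1 + epsilon) / 2 * (OPT V f k / real k)})
           \<ge> eta * real k"
proof (rule ccontr)
  define M where "M = OPT V f k"
  define c where "c = (1 + epsilon) / 2 * (M / real k)"
  define G where "G = {x \<in> Os. marg f x S' \<ge> c}"
  define B where "B = Os - G"
  assume "\<not> ?thesis"
  then have cG: "real (card G) < eta * real k" unfolding G_def c_def M_def by simp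
  have gam: "gamma = 1/100" unfolding gamma_def by (simp add: power_int_def inverse_eq_divide power_divide)
  have et: "eta = 5/100000" unfolding eta_def by (simp add: power_int_def inverse_eq_divide power_divide)
  have al: "alpha = 3/1000" using assms(11) by (simp add: power_int_def inverse_eq_divide power_divide)
  have ep: "epsilon = 1/100000000" using assms(14) by (simp add: power_int_def inverse_eq_divide power_divide)
  have Mpos: "M > 0"
  proof (rule ccontr)
    assume "\<not> M > 0"
    moreover have "1 - gamma > 0" using gam by simp
    ultimately have "(1 - gamma) / 2 * M \<le> 0" by (simp add: mult_nonneg_nonpos)
    then have "dense V f k {}" unfolding dense_def M_def
      using assms(5) et by (auto simp: normalized_def)
    then show False using no_dense by blast
  qed
  have fin: "finite Os" using assms(1,8) finite_subset by blast
  have GV: "G \<subseteq> V" "B \<subseteq> V" using assms(8) unfolding G_def B_def by auto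
  have fG: "f G < (1 - gamma) / 2 * M"
  proof (rule ccontr)
    assume "\<not> ?thesis"
    then have "dense V f k G" unfolding dense_def M_def using GV cG by auto
    then show False using no_dense by blast
  qed
  have sub1: "f (S' \<union> G) + f (S' \<inter> G) \<le> f S' + f G"
    using assms(4,12) GV unfolding submodular_def by auto
  have "f (S' \<inter> G) \<ge> 0" using assms(2,12) unfolding nonneg_on_def by (meson Int_lower1 order_trans)
  with sub1 have fSG: "f (S' \<union> G) \<le> f S' + f G" by simp
  have finB: "finite B" using fin unfolding B_def by auto
  have SGV: "S' \<union> G \<subseteq> V" using GV assms(12) by auto
  have s2: "f ((S' \<union> G) \<union> B) \<le> f (S' \<union> G) + (\<Sum>b\<in>B. marg f b (S' \<union> G))"
    using sumbound[OF assms(4,3) finB SGV GV(2)] .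
  have s3: "(\<Sum>b\<in>B. marg f b (S' \<union> G)) \<le> (\<Sum>b\<in>B. marg f b S')"
    apply (rule sum_mono) using dimret[OF assms(4,3)] SGV GV(2) by blast
  have lt: "\<forall>b\<in>B. marg f b S' \<le> c" unfolding B_def G_def by auto
  have s4: "(\<Sum>b\<in>B. marg f b S') \<le> real (card B) * c"
    using sum_bounded_above[of B "\<lambda>b. marg f b S'" c] lt by simp
  have cpos: "c \<ge> 0" unfolding c_def using Mpos ep by simp
  have "card B \<le> k" using assms(9) fin unfolding B_def
    by (meson Diff_subset card_mono le_trans)
  then have "real (card B) * c \<le> real k * c" using cpos by (simp add: mult_right_mono)
  also have "real k * c = (1 + epsilon) / 2 * M" unfolding c_def using assms(6) by simp
  finally have s5: "real (card B) * c \<le> (1 + epsilon) / 2 * M" .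
  have eq: "(S' \<union> G) \<union> B = S' \<union> Os" unfolding B_def G_def by auto
  have "f Os \<le> f (S' \<union> Os)" using assms(3,8,12) unfolding monotone_set_fun_def by auto
  then have "M \<le> f ((S' \<union> G) \<union> B)" using eq assms(10) M_def by simp
  moreover have "f S' \<le> alpha * M" using assms(13) M_def by simp
  ultimately have "M < alpha * M + (1 - gamma) / 2 * M + (1 + epsilon) / 2 * M"
    using s2 s3 s4 s5 fSG fG by linarith
  then show False using Mpos unfolding al gam ep by (simp add: field_simps)
qed

end
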